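(* If $\eta_n,\eta\in\mathcal{L}$ and $\eta_n\to\eta$ weakly, then $c_\pi(\eta_n)\to c_\pi(\eta)$.
   Context: $\pi\in(0,1)$, $\epsilon>0$, $B>0$. $\mathcal{L}=\{\eta\in\mathcal{P}(\mathbb{R}):\mathbb{E}_\eta|X|^{1+\epsilon}\le B\}$. $F_\eta(x)=\eta((-\infty,x])$, $x_\pi(\eta)=\min\{z:F_\eta(z)\ge\pi\}$, $c_\pi(\eta)=\frac{F_\eta(x_\pi(\eta))-\pi}{1-\pi}x_\pi(\eta)+\frac{1}{1-\pi}\int_{(x_\pi(\eta),\infty)}y\,dF_\eta(y)$. *)

theory Defs
  imports "HOL-Probability.Probability"
begin

text \<open>The class L: Borel probability measures on the real line with
  E|X|^(1+eps) <= B (moment as a nonnegative integral, so it may be infinite).\<close>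
definition momL :: "real \<Rightarrow> real \<Rightarrow> real measure set" where
  "momL eps B = {\<eta>. prob_space \<eta> \<and> sets \<eta> = sets borel \<and>
      (\<integral>\<^sup>+ x. ennreal (\<bar>x\<bar> powr (1 + eps)) \<partial>\<eta>) \<le> ennreal B}"

definition xpi :: "real \<Rightarrow> real measure \<Rightarrow> real" where
  "xpi p \<eta> = (LEAST z. cdf \<eta> z \<ge> p)"

definition cpi :: "real \<Rightarrow> real measure \<Rightarrow> real" where
  "cpi p \<eta> = (cdf \<eta> (xpi p \<eta>) - p) / (1 - p) * xpi p \<eta>
      + 1 / (1 - p) * (LINT y:{xpi p \<eta><..}|\<eta>. y)"

end

theory Submission
  imports Defs
begin

lemma momL_rd:
  assumes "\<mu> \<in> momL eps B" shows "real_distribution \<mu>"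
  using assms unfolding momL_def real_distribution_def real_distribution_axioms_def by auto

lemma momL_meas:
  assumes "\<mu> \<in> momL eps B" "f \<in> borel_measurable borel" shows "f \<in> borel_measurable \<mu>"
proof -
  have "sets \<mu> = sets borel" using assms unfolding momL_def by auto
  then show ?thesis using assms(2) measurable_cong_sets by blast
qed

lemma momL_mom:
  assumes "\<mu> \<in> momL eps B" "0 \<le> B"
  shows "integrable \<mu> (\<lambda>y. \<bar>y\<bar> powr (1 + eps))" "(\<integral>y. \<bar>y\<bar> powr (1 + eps) \<partial>\<mu>) \<le> B"
proof -
  have m: "(\<lambda>y. \<bar>y\<bar> powr (1 + eps)) \<in> borel_measurable \<mu>"
    by (rule momL_meas[OF assms(1)]) measurable
  have le: "(\<integral>\<^sup>+ x. ennreal (\<bar>x\<bar> powr (1 + eps)) \<partial>\<mu>) \<le> ennreal B"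
    using assms(1) unfolding momL_def by blast
  show i: "integrable \<mu> (\<lambda>y. \<bar>y\<bar> powr (1 + eps))"
  proof (rule integrableI_nonneg[OF m])
    show "AE x in \<mu>. 0 \<le> \<bar>x\<bar> powr (1 + eps)" by simp
    show "(\<integral>\<^sup>+ x. ennreal (\<bar>x\<bar> powr (1 + eps)) \<partial>\<mu>) < \<infinity>"
      using le_less_trans[OF le ennreal_less_top[of B]] by simp
  qed
  have eq: "(\<integral>\<^sup>+ x. ennreal (\<bar>x\<bar> powr (1 + eps)) \<partial>\<mu>) = ennreal (\<integral>y. \<bar>y\<bar> powr (1 + eps) \<partial>\<mu>)"
    by (rule nn_integral_eq_integral[OF i]) simp
  have "ennreal (\<integral>y. \<bar>y\<bar> powr (1 + eps) \<partial>\<mu>) \<le> ennreal B"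
    using le unfolding eq .
  then show "(\<integral>y. \<bar>y\<bar> powr (1 + eps) \<partial>\<mu>) \<le> B"
    using assms(2) by (simp add: ennreal_le_iff)
qed

lemma momL_int:
  assumes "\<mu> \<in> momL eps B" "0 < eps" "f \<in> borel_measurable borel"
    "\<And>y. \<bar>f y\<bar> \<le> C + D * \<bar>y\<bar> powr (1 + eps)" and B0: "0 \<le> B"
  shows "integrable \<mu> f"
proof -
  interpret real_distribution \<mu> by (rule momL_rd[OF assms(1)])
  have "integrable \<mu> (\<lambda>y. C + D * \<bar>y\<bar> powr (1 + eps))"
    using momL_mom(1)[OF assms(1) B0] by auto
  then show ?thesis
  proof (rule Bochner_Integration.integrable_bound)
    show "f \<in> borel_measurable \<mu>" by (rule momL_meas[OF assms(1) assms(3)])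
    show "AE x in \<mu>. norm (f x) \<le> norm (C + D * \<bar>x\<bar> powr (1 + eps))"
    proof (rule AE_I2)
      fix x show "norm (f x) \<le> norm (C + D * \<bar>x\<bar> powr (1 + eps))"
        using assms(4)[of x] by simp
    qed
  qed
qed

lemma lin_bound:
  fixes y eps :: real assumes "0 < eps" shows "\<bar>y\<bar> \<le> 1 + \<bar>y\<bar> powr (1 + eps)"
proof (cases "\<bar>y\<bar> \<le> 1")
  case False
  then have "\<bar>y\<bar> powr 1 \<le> \<bar>y\<bar> powr (1 + eps)" by (intro powr_mono) (use assms in auto)
  then show ?thesis by simp
qed (use powr_ge_zero[of "\<bar>y\<bar>" "1+eps"] in linarith)


lemma rcm:
  assumes "real_distribution \<mu>"
  shows "right_continuous_mono (cdf \<mu>) 0 1"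
proof -
  interpret real_distribution \<mu> by fact
  show ?thesis
  proof
    show "\<And>x. continuous (at_right x) (cdf \<mu>)" by (rule cdf_is_right_cont)
    show "mono (cdf \<mu>)" unfolding mono_def using cdf_nondecreasing by blast
    show "(cdf \<mu> \<longlongrightarrow> 0) at_bot" by (rule cdf_lim_at_bot)
    show "(cdf \<mu> \<longlongrightarrow> 1) at_top" by (rule cdf_lim_at_top_prob)
  qed
qed

lemma least_cdf:
  assumes "real_distribution \<mu>" "0 < p" "p < 1"
  shows "p \<le> cdf \<mu> (LEAST z. p \<le> cdf \<mu> z)" "\<And>z. p \<le> cdf \<mu> z \<Longrightarrow> (LEAST z. p \<le> cdf \<mu> z) \<le> z"
proof -
  have pi: "\<And>x. p \<le> cdf \<mu> x \<longleftrightarrow> Inf {x. p \<le> cdf \<mu> x} \<le> x"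
    using right_continuous_mono.pseudoinverse[OF rcm[OF assms(1)] assms(2,3)] by blast
  have e: "(LEAST z. p \<le> cdf \<mu> z) = Inf {x. p \<le> cdf \<mu> x}"
  proof (rule Least_equality)
    show "p \<le> cdf \<mu> (Inf {x. p \<le> cdf \<mu> x})" using pi by blast
    show "\<And>y. p \<le> cdf \<mu> y \<Longrightarrow> Inf {x. p \<le> cdf \<mu> x} \<le> y" using pi by blast
  qed
  show "p \<le> cdf \<mu> (LEAST z. p \<le> cdf \<mu> z)" unfolding e using pi by blast
  show "\<And>z. p \<le> cdf \<mu> z \<Longrightarrow> (LEAST z. p \<le> cdf \<mu> z) \<le> z" unfolding e using pi by blast
qed
lemma xpi_props:
  assumes "\<mu> \<in> momL eps B" "0 < p" "p < 1"
  shows "p \<le> cdf \<mu> (xpi p \<mu>)" "\<And>z. p \<le> cdf \<mu> z \<Longrightarrow> xpi p \<mu> \<le> z"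
  unfolding xpi_def using least_cdf[OF momL_rd[OF assms(1)] assms(2,3)] by auto

lemma tail_subset:
  fixes R eps :: real assumes "0 < eps" "1 \<le> R"
  shows "{y. R \<le> \<bar>y\<bar>} \<subseteq> {x. R \<le> \<bar>x\<bar> powr (1 + eps)}"
proof
  fix y :: real assume "y \<in> {y. R \<le> \<bar>y\<bar>}"
  then have h: "R \<le> \<bar>y\<bar>" by simp
  then have "\<bar>y\<bar> powr 1 \<le> \<bar>y\<bar> powr (1 + eps)"
    using assms by (intro powr_mono) auto
  then show "y \<in> {x. R \<le> \<bar>x\<bar> powr (1 + eps)}" using h assms by simp
qed

lemma tail_bound:
  assumes "\<mu> \<in> momL eps B" "0 < eps" "1 \<le> R" and B0: "0 \<le> B"
  shows "measure \<mu> {y. R \<le> \<bar>y\<bar>} \<le> B / R"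
proof -
  interpret real_distribution \<mu> by (rule momL_rd[OF assms(1)])
  have s: "{x. R \<le> \<bar>x\<bar> powr (1 + eps)} \<in> sets \<mu>"
  proof -
    have "{x. R \<le> \<bar>x\<bar> powr (1 + eps)} \<in> sets borel" by measurable
    then show ?thesis by (rule sets_M)
  qed
  have "measure \<mu> {y. R \<le> \<bar>y\<bar>} \<le> measure \<mu> {x. R \<le> \<bar>x\<bar> powr (1 + eps)}"
    by (rule finite_measure_mono[OF tail_subset[OF assms(2,3)] s])
  also have "\<dots> = measure \<mu> {x\<in>space \<mu>. \<bar>x\<bar> powr (1 + eps) \<ge> R}"
    by simp
  also have "\<dots> \<le> (\<integral>y. \<bar>y\<bar> powr (1 + eps) \<partial>\<mu>) / R"
  proof (rule integral_Markov_inequality_measure[where A="space \<mu>"])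
    show "integrable \<mu> (\<lambda>y. \<bar>y\<bar> powr (1 + eps))" by (rule momL_mom(1)[OF assms(1) B0])
    show "space \<mu> \<in> sets \<mu>" by simp
    show "AE x in \<mu>. 0 \<le> \<bar>x\<bar> powr (1 + eps)" by simp
    show "0 < R" using assms(3) by simp
  qed
  also have "\<dots> \<le> B / R"
    using momL_mom(2)[OF assms(1) B0] assms(3) by (intro divide_right_mono) auto
  finally show ?thesis .
qed

lemma alg1: fixes p x E F :: real assumes "p<1" shows "(F - p)/(1-p)*x + 1/(1-p)*(E + x*(1-F)) = x + E/(1-p)"
proof -
  have q: "1 - p \<noteq> 0" using assms by simp
  have "(F - p)/(1-p)*x + 1/(1-p)*(E + x*(1-F)) = ((F - p)*x + (E + x*(1-F)))/(1-p)"
    by (simp add: add_divide_distrib)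
  also have "(F - p)*x + (E + x*(1-F)) = x*(1-p) + E" by (simp add: algebra_simps)
  also have "(x*(1-p) + E)/(1-p) = x + E/(1-p)" using q by (simp add: add_divide_distrib)
  finally show ?thesis .
qed

definition Ep :: "real measure \<Rightarrow> real \<Rightarrow> real" where
  "Ep \<mu> t = (\<integral>y. max 0 (y - t) \<partial>\<mu>)"

definition gf :: "real \<Rightarrow> real measure \<Rightarrow> real \<Rightarrow> real" where
  "gf p \<mu> t = t + Ep \<mu> t / (1 - p)"

lemma int_maxp:
  assumes "\<mu> \<in> momL eps B" "0 < eps" "0 \<le> B"
  shows "integrable \<mu> (\<lambda>y. max 0 (y - t))"
proof (rule momL_int[OF assms(1,2), where C="1 + \<bar>t\<bar>" and D=1])
  show "(\<lambda>y. max 0 (y - t)) \<in> borel_measurable borel" by measurable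
  show "\<And>y. \<bar>max 0 (y - t)\<bar> \<le> 1 + \<bar>t\<bar> + 1 * \<bar>y\<bar> powr (1 + eps)"
    using lin_bound[OF assms(2)] by (smt (verit))
  show "0 \<le> B" by fact
qed

lemma int_id:
  assumes "\<mu> \<in> momL eps B" "0 < eps" "0 \<le> B"
  shows "integrable \<mu> (\<lambda>y. y)"
proof (rule momL_int[OF assms(1,2), where C="1" and D=1])
  show "(\<lambda>y. y) \<in> borel_measurable borel" by measurable
  show "\<And>y. \<bar>y\<bar> \<le> 1 + 1 * \<bar>y\<bar> powr (1 + eps)"
    using lin_bound[OF assms(2)] by simp
  show "0 \<le> B" by fact
qed

lemma int_ind:
  assumes "\<mu> \<in> momL eps B"
  shows "integrable \<mu> (\<lambda>y. c * indicator {x<..} y :: real)"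
proof -
  interpret real_distribution \<mu> by (rule momL_rd[OF assms(1)])
  have "integrable \<mu> (indicator {x<..} :: real \<Rightarrow> real)"
    by (rule integrable_real_indicator) (simp_all add: emeasure_eq_measure)
  then show ?thesis by (rule integrable_mult_right)
qed

lemma cpi_eq:
  assumes "\<mu> \<in> momL eps B" "0 < eps" "0 \<le> B" "0 < p" "p < 1"
  shows "cpi p \<mu> = gf p \<mu> (xpi p \<mu>)"
proof -
  interpret real_distribution \<mu> by (rule momL_rd[OF assms(1)])
  define x where "x = xpi p \<mu>"
  have pw: "\<And>y. indicator {x<..} y *\<^sub>R y = max 0 (y - x) + x * indicator {x<..} y"
    by (auto simp: indicator_def)
  have "(LINT y:{x<..}|\<mu>. y) = (\<integral>y. max 0 (y - x) + x * indicator {x<..} y \<partial>\<mu>)"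
    unfolding set_lebesgue_integral_def pw ..
  also have "\<dots> = Ep \<mu> x + (\<integral>y. x * indicator {x<..} y \<partial>\<mu>)"
    unfolding Ep_def by (rule Bochner_Integration.integral_add[OF int_maxp[OF assms(1-3)] int_ind[OF assms(1)]])
  also have "(\<integral>y. x * indicator {x<..} y \<partial>\<mu>) = x * measure \<mu> {x<..}"
    by simp
  also have "measure \<mu> {x<..} = 1 - cdf \<mu> x"
  proof -
    have "measure \<mu> (space \<mu> - {..x}) = 1 - measure \<mu> {..x}"
      by (rule prob_compl) simp
    moreover have "space \<mu> - {..x} = {x<..}" by auto
    ultimately show ?thesis by (simp add: cdf_def)
  qed
  finally have L: "(LINT y:{x<..}|\<mu>. y) = Ep \<mu> x + x * (1 - cdf \<mu> x)" .
  have "cpi p \<mu> = (cdf \<mu> x - p) / (1 - p) * x + 1 / (1 - p) * (Ep \<mu> x + x * (1 - cdf \<mu> x))"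
    unfolding cpi_def x_def[symmetric] L ..
  also have "\<dots> = x + Ep \<mu> x / (1 - p)"
    by (rule alg1[OF assms(5)])
  finally show ?thesis unfolding gf_def x_def .
qed

lemma Ep_diff_ge:
  assumes "\<mu> \<in> momL eps B" "0 < eps" "0 \<le> B"
    and "\<And>y. c * indicator {z<..} y \<le> max 0 (y - t) - max 0 (y - s)"
  shows "c * (1 - cdf \<mu> z) \<le> Ep \<mu> t - Ep \<mu> s"
proof -
  interpret real_distribution \<mu> by (rule momL_rd[OF assms(1)])
  have m: "measure \<mu> {z<..} = 1 - cdf \<mu> z"
  proof -
    have "measure \<mu> (space \<mu> - {..z}) = 1 - measure \<mu> {..z}"
      by (rule prob_compl) simp
    moreover have "space \<mu> - {..z} = {z<..}" by auto
    ultimately show ?thesis by (simp add: cdf_def)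
  qed
  have "c * (1 - cdf \<mu> z) = (\<integral>y. c * indicator {z<..} y \<partial>\<mu>)"
    using m by simp
  also have "\<dots> \<le> (\<integral>y. max 0 (y - t) - max 0 (y - s) \<partial>\<mu>)"
    by (rule integral_mono[OF int_ind[OF assms(1)] Bochner_Integration.integrable_diff[OF int_maxp[OF assms(1-3)] int_maxp[OF assms(1-3)]] assms(4)])
  also have "\<dots> = Ep \<mu> t - Ep \<mu> s"
    unfolding Ep_def by (rule Bochner_Integration.integral_diff[OF int_maxp[OF assms(1-3)] int_maxp[OF assms(1-3)]])
  finally show ?thesis .
qed

lemma gf_min:
  assumes "\<mu> \<in> momL eps B" "0 < eps" "0 \<le> B" "0 < p" "p < 1"
  shows "gf p \<mu> (xpi p \<mu>) \<le> gf p \<mu> t"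
proof -
  define x where "x = xpi p \<mu>"
  have Fx: "p \<le> cdf \<mu> x" unfolding x_def by (rule xpi_props(1)[OF assms(1,4,5)])
  have Fz: "cdf \<mu> z < p" if "z < x" for z
    using xpi_props(2)[OF assms(1,4,5), of z] that unfolding x_def by linarith
  have q: "0 < 1 - p" using assms by simp
  show ?thesis
  proof (cases "x \<le> t")
    case True
    have "(-(t - x)) * (1 - cdf \<mu> x) \<le> Ep \<mu> t - Ep \<mu> x"
    proof (rule Ep_diff_ge[OF assms(1-3)])
      fix y show "- (t - x) * indicator {x<..} y \<le> max 0 (y - t) - max 0 (y - x)"
        using True by (auto simp: indicator_def)
    qed
    moreover have "(t - x) * (1 - cdf \<mu> x) \<le> (t - x) * (1 - p)"
      using True Fx by (intro mult_left_mono) auto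
    ultimately have "- (t - x) * (1 - p) \<le> Ep \<mu> t - Ep \<mu> x" by linarith
    then have "- (t - x) \<le> (Ep \<mu> t - Ep \<mu> x) / (1 - p)"
      using q by (simp add: le_divide_eq)
    then show ?thesis unfolding gf_def x_def[symmetric] by (simp add: diff_divide_distrib)
  next
    case False
    have key: "z - x \<le> gf p \<mu> t - gf p \<mu> x" if "t < z" "z < x" for z
    proof -
      have "(z - t) * (1 - cdf \<mu> z) \<le> Ep \<mu> t - Ep \<mu> x"
      proof (rule Ep_diff_ge[OF assms(1-3)])
        fix y show "(z - t) * indicator {z<..} y \<le> max 0 (y - t) - max 0 (y - x)"
          using that by (auto simp: indicator_def)
      qed
      moreover have "(z - t) * (1 - p) \<le> (z - t) * (1 - cdf \<mu> z)"
        using that Fz[OF that(2)] by (intro mult_left_mono) auto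
      ultimately have "(z - t) * (1 - p) \<le> Ep \<mu> t - Ep \<mu> x" by linarith
      then have "z - t \<le> (Ep \<mu> t - Ep \<mu> x) / (1 - p)"
        using q by (simp add: le_divide_eq)
      then show ?thesis unfolding gf_def by (simp add: diff_divide_distrib)
    qed
    show ?thesis
    proof (rule ccontr)
      assume "\<not> ?thesis"
      then have D: "gf p \<mu> t - gf p \<mu> x < 0" unfolding x_def by simp
      define D where "D = gf p \<mu> t - gf p \<mu> x"
      have D': "D < 0" using D unfolding D_def .
      define z where "z = max ((t + x) / 2) (x + D / 2)"
      have z1: "(t + x) / 2 \<le> z" "x + D / 2 \<le> z" unfolding z_def by simp_all
      have "t < (t + x) / 2" using False by simp
      then have "t < z" using z1(1) by linarith
      moreover have "z < x" using False D' unfolding z_def by simp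
      ultimately have "z - x \<le> D" unfolding D_def by (rule key)
      with z1(2) D' show False by linarith
    qed
  qed
qed

lemma Ep_lip1:
  assumes "\<mu> \<in> momL eps B" "0 < eps" "0 \<le> B"
  shows "Ep \<mu> t - Ep \<mu> s \<le> \<bar>t - s\<bar>"
proof -
  interpret real_distribution \<mu> by (rule momL_rd[OF assms(1)])
  have i: "integrable \<mu> (\<lambda>y. max 0 (y - t) - max 0 (y - s))"
    by (rule Bochner_Integration.integrable_diff[OF int_maxp[OF assms(1-3)] int_maxp[OF assms(1-3)]])
  have e: "Ep \<mu> t - Ep \<mu> s = (\<integral>y. max 0 (y - t) - max 0 (y - s) \<partial>\<mu>)"
    unfolding Ep_def by (rule Bochner_Integration.integral_diff[OF int_maxp[OF assms(1-3)] int_maxp[OF assms(1-3)], symmetric])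
  have "(\<integral>y. max 0 (y - t) - max 0 (y - s) \<partial>\<mu>) \<le> (\<integral>y. \<bar>t - s\<bar> \<partial>\<mu>)"
    by (rule integral_mono[OF i]) auto
  also have "(\<integral>y. \<bar>t - s\<bar> \<partial>\<mu>) = \<bar>t - s\<bar>" using prob_space by (simp del: space_eq_univ)
  finally show ?thesis unfolding e .
qed

lemma Ep_lip:
  assumes "\<mu> \<in> momL eps B" "0 < eps" "0 \<le> B"
  shows "\<bar>Ep \<mu> t - Ep \<mu> s\<bar> \<le> \<bar>t - s\<bar>"
  using Ep_lip1[OF assms, of t s] Ep_lip1[OF assms, of s t] by linarith

lemma gf_lip:
  assumes "\<mu> \<in> momL eps B" "0 < eps" "0 \<le> B" "p < 1"
  shows "gf p \<mu> s - (1 + 1 / (1 - p)) * \<bar>t - s\<bar> \<le> gf p \<mu> t"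
proof -
  have q: "0 < 1 - p" using assms by simp
  have "\<bar>Ep \<mu> t - Ep \<mu> s\<bar> / (1 - p) \<le> \<bar>t - s\<bar> / (1 - p)"
    using Ep_lip[OF assms(1-3)] q by (intro divide_right_mono) auto
  then have "(Ep \<mu> s - Ep \<mu> t) / (1 - p) \<le> \<bar>t - s\<bar> / (1 - p)"
    using q by (smt (verit) divide_right_mono)
  then show ?thesis unfolding gf_def by (simp add: algebra_simps diff_divide_distrib)
qed

lemma xpi_bound:
  assumes "\<mu> \<in> momL eps B" "0 < eps" "0 < B" "0 < p" "p < 1"
  shows "\<bar>xpi p \<mu>\<bar> \<le> 2 * B / min p (1 - p) + 1"
proof -
  interpret real_distribution \<mu> by (rule momL_rd[OF assms(1)])
  define m where "m = min p (1 - p)"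
  define Mb where "Mb = 2 * B / m + 1"
  have m0: "0 < m" using assms unfolding m_def by simp
  have Mb1: "1 \<le> Mb" using m0 assms unfolding Mb_def by simp
  have "m * (2 * B / m) = 2 * B" using m0 by simp
  then have "B < m * Mb" unfolding Mb_def using m0 assms by (simp add: distrib_left)
  then have BM: "B / Mb < m" using Mb1 by (simp add: divide_less_eq mult.commute)
  define T where "T = measure \<mu> {y. Mb \<le> \<bar>y\<bar>}"
  have T: "T < m" using tail_bound[OF assms(1,2) Mb1] assms(3) BM unfolding T_def by linarith
  have Tset: "{y. Mb \<le> \<bar>y\<bar>} \<in> sets \<mu>"
  proof -
    have "{y::real. Mb \<le> \<bar>y\<bar>} \<in> sets borel" by measurable
    then show ?thesis by (rule sets_M)
  qed
  have "cdf \<mu> (- Mb) \<le> T" unfolding cdf_def T_def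
    by (rule finite_measure_mono[OF _ Tset]) auto
  then have c1: "cdf \<mu> (- Mb) < p" using T unfolding m_def by linarith
  have mm: "measure \<mu> {Mb<..} = 1 - cdf \<mu> Mb"
  proof -
    have "measure \<mu> (space \<mu> - {..Mb}) = 1 - measure \<mu> {..Mb}"
      by (rule prob_compl) simp
    moreover have "space \<mu> - {..Mb} = {Mb<..}" by auto
    ultimately show ?thesis by (simp add: cdf_def)
  qed
  have "measure \<mu> {Mb<..} \<le> T" unfolding T_def
    by (rule finite_measure_mono[OF _ Tset]) auto
  then have c2: "p \<le> cdf \<mu> Mb" using T mm unfolding m_def by linarith
  have u: "xpi p \<mu> \<le> Mb" by (rule xpi_props(2)[OF assms(1,4,5) c2])
  have l: "- Mb < xpi p \<mu>"
  proof (rule ccontr)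
    assume "\<not> - Mb < xpi p \<mu>"
    then have "cdf \<mu> (xpi p \<mu>) \<le> cdf \<mu> (- Mb)" by (intro cdf_nondecreasing) simp
    with c1 xpi_props(1)[OF assms(1,4,5)] show False by linarith
  qed
  from u l show ?thesis unfolding Mb_def m_def by simp
qed

lemma trunc_pw:
  fixes y t R eps :: real
  assumes "0 < R" "0 < eps"
  shows "max 0 (y - t) - min (max 0 (y - t)) (R + \<bar>t\<bar>) \<le> \<bar>y\<bar> powr (1 + eps) / R powr eps"
proof (cases "y - t \<le> R + \<bar>t\<bar>")
  case True
  then have "max 0 (y - t) - min (max 0 (y - t)) (R + \<bar>t\<bar>) = 0"
    using assms(1) by (auto simp: max_def min_def)
  moreover have "0 \<le> \<bar>y\<bar> powr (1 + eps) / R powr eps" by simp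
  ultimately show ?thesis by linarith
next
  case False
  then have y: "R < y" by linarith
  then have y0: "0 < y" using assms by linarith
  have "max 0 (y - t) - min (max 0 (y - t)) (R + \<bar>t\<bar>) = y - t - (R + \<bar>t\<bar>)"
    using False assms(1) by (auto simp: max_def min_def)
  also have "\<dots> \<le> y" using assms by linarith
  also have "y = y * R powr eps / R powr eps" using assms by simp
  also have "y * R powr eps \<le> y * y powr eps"
    using y y0 assms by (intro mult_left_mono powr_mono2) auto
  also have "y * y powr eps = \<bar>y\<bar> powr (1 + eps)"
    using y0 by (simp add: powr_add)
  finally show ?thesis using assms by (simp add: divide_right_mono)
qed

lemma Ep_trunc:
  assumes "\<mu> \<in> momL eps B" "0 < eps" "0 \<le> B" "0 < R"
  shows "\<bar>Ep \<mu> t - (\<integral>y. min (max 0 (y - t)) (R + \<bar>t\<bar>) \<partial>\<mu>)\<bar> \<le> B / R powr eps"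
proof -
  interpret real_distribution \<mu> by (rule momL_rd[OF assms(1)])
  have ih: "integrable \<mu> (\<lambda>y. min (max 0 (y - t)) (R + \<bar>t\<bar>))"
  proof (rule momL_int[OF assms(1,2), where C="1 + \<bar>t\<bar>" and D=1])
    show "(\<lambda>y. min (max 0 (y - t)) (R + \<bar>t\<bar>)) \<in> borel_measurable borel" by measurable
    show "\<And>y. \<bar>min (max 0 (y - t)) (R + \<bar>t\<bar>)\<bar> \<le> 1 + \<bar>t\<bar> + 1 * \<bar>y\<bar> powr (1 + eps)"
      using lin_bound[OF assms(2)] assms(4) by (smt (verit))
    show "0 \<le> B" by fact
  qed
  have im: "integrable \<mu> (\<lambda>y. \<bar>y\<bar> powr (1 + eps) / R powr eps)"
    using momL_mom(1)[OF assms(1,3)] by simp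
  have e: "Ep \<mu> t - (\<integral>y. min (max 0 (y - t)) (R + \<bar>t\<bar>) \<partial>\<mu>)
      = (\<integral>y. max 0 (y - t) - min (max 0 (y - t)) (R + \<bar>t\<bar>) \<partial>\<mu>)"
    unfolding Ep_def by (rule Bochner_Integration.integral_diff[OF int_maxp[OF assms(1-3)] ih, symmetric])
  have i2: "integrable \<mu> (\<lambda>y. max 0 (y - t) - min (max 0 (y - t)) (R + \<bar>t\<bar>))"
    by (rule Bochner_Integration.integrable_diff[OF int_maxp[OF assms(1-3)] ih])
  have "(\<integral>y. max 0 (y - t) - min (max 0 (y - t)) (R + \<bar>t\<bar>) \<partial>\<mu>)
      \<le> (\<integral>y. \<bar>y\<bar> powr (1 + eps) / R powr eps \<partial>\<mu>)"
    by (rule integral_mono[OF i2 im]) (rule trunc_pw[OF assms(4,2)])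
  also have "\<dots> = (\<integral>y. \<bar>y\<bar> powr (1 + eps) \<partial>\<mu>) / R powr eps" by simp
  also have "\<dots> \<le> B / R powr eps"
    using momL_mom(2)[OF assms(1,3)] by (intro divide_right_mono) auto
  finally have u: "(\<integral>y. max 0 (y - t) - min (max 0 (y - t)) (R + \<bar>t\<bar>) \<partial>\<mu>) \<le> B / R powr eps" .
  have "0 \<le> (\<integral>y. max 0 (y - t) - min (max 0 (y - t)) (R + \<bar>t\<bar>) \<partial>\<mu>)"
    by (rule integral_nonneg_AE) simp
  with u show ?thesis unfolding e by simp
qed

lemma Ep_conv:
  assumes mu: "\<And>n. \<mu>s n \<in> momL eps B" and eta: "\<eta> \<in> momL eps B" and w: "weak_conv_m \<mu>s \<eta>"
    and eps: "0 < eps" and B: "0 < B"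
  shows "(\<lambda>n. Ep (\<mu>s n) t) \<longlonglongrightarrow> Ep \<eta> t"
proof (rule LIMSEQ_I)
  fix r :: real assume r: "0 < r"
  define R where "R = (3 * B / r + 1) powr (1 / eps)"
  have "0 < 3 * B / r" using B r by simp
  then have a0: "0 < 3 * B / r + 1" by linarith
  have R0: "0 < R" unfolding R_def using a0 by simp
  have P: "R powr eps = 3 * B / r + 1"
    unfolding R_def using a0 eps by (simp add: powr_powr)
  have "r * R powr eps = 3 * B + r" unfolding P using r by (simp add: distrib_left)
  then have "B < r / 3 * R powr eps" using r by simp
  moreover have "0 < R powr eps" using R0 by simp
  ultimately have bnd: "B / R powr eps < r / 3" by (simp add: pos_divide_less_eq)
  define h where "h = (\<lambda>y. min (max 0 (y - t)) (R + \<bar>t\<bar>))"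
  have "(\<lambda>n. integral\<^sup>L (\<mu>s n) h) \<longlonglongrightarrow> integral\<^sup>L \<eta> h"
  proof (rule weak_conv_imp_integral_bdd_continuous_conv[OF momL_rd[OF mu] momL_rd[OF eta] w])
    show "\<And>x. isCont h x" unfolding h_def by (intro continuous_intros)
    show "\<And>x. norm (h x) \<le> R + \<bar>t\<bar>" unfolding h_def using R0 by auto
  qed
  then obtain no where no: "\<And>n. n \<ge> no \<Longrightarrow> norm (integral\<^sup>L (\<mu>s n) h - integral\<^sup>L \<eta> h) < r / 3"
    using LIMSEQ_D[of _ _ "r / 3"] r by (metis zero_less_divide_iff zero_less_numeral)
  show "\<exists>no. \<forall>n\<ge>no. norm (Ep (\<mu>s n) t - Ep \<eta> t) < r"
  proof (intro exI allI impI)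
    fix n assume "no \<le> n"
    then have 1: "\<bar>integral\<^sup>L (\<mu>s n) h - integral\<^sup>L \<eta> h\<bar> < r / 3" using no by simp
    have 2: "\<bar>Ep (\<mu>s n) t - integral\<^sup>L (\<mu>s n) h\<bar> \<le> B / R powr eps"
      unfolding h_def by (rule Ep_trunc[OF mu eps _ R0]) (use B in simp)
    have 3: "\<bar>Ep \<eta> t - integral\<^sup>L \<eta> h\<bar> \<le> B / R powr eps"
      unfolding h_def by (rule Ep_trunc[OF eta eps _ R0]) (use B in simp)
    define Q where "Q = B / R powr eps"
    have b2: "\<bar>Ep (\<mu>s n) t - integral\<^sup>L (\<mu>s n) h\<bar> \<le> Q" using 2 by (simp add: Q_def)
    have b3: "\<bar>Ep \<eta> t - integral\<^sup>L \<eta> h\<bar> \<le> Q" using 3 by (simp add: Q_def)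
    have bq: "Q < r / 3" using bnd by (simp add: Q_def)
    show "norm (Ep (\<mu>s n) t - Ep \<eta> t) < r"
      unfolding real_norm_def using 1 b2 b3 bq by linarith
  qed
qed

theorem lemma6:
  fixes p eps B :: real and \<eta>s :: "nat \<Rightarrow> real measure" and \<eta> :: "real measure"
  assumes "0 < p" "p < 1" "0 < eps" "0 < B"
    and "\<And>n. \<eta>s n \<in> momL eps B" "\<eta> \<in> momL eps B"
    and "weak_conv_m \<eta>s \<eta>"
  shows "(\<lambda>n. cpi p (\<eta>s n)) \<longlonglongrightarrow> cpi p \<eta>"
proof -
  note p0 = assms(1) and p1 = assms(2) and eps = assms(3) and Bp = assms(4)
    and mu = assms(5) and eta = assms(6) and w = assms(7)
  have B0: "0 \<le> B" using Bp by simp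
  define L where "L = 1 + 1 / (1 - p)"
  have "0 < 1 / (1 - p)" using p1 by simp
  then have L0: "0 < L" unfolding L_def by linarith
  define Mb where "Mb = 2 * B / min p (1 - p) + 1"
  define x where "x = xpi p \<eta>"
  have ceta: "cpi p \<eta> = gf p \<eta> x"
    unfolding x_def by (rule cpi_eq[OF eta eps B0 p0 p1])
  have cn: "\<And>n. cpi p (\<eta>s n) = gf p (\<eta>s n) (xpi p (\<eta>s n))"
    by (rule cpi_eq[OF mu eps B0 p0 p1])
  have gconv: "\<And>t. (\<lambda>n. gf p (\<eta>s n) t) \<longlonglongrightarrow> gf p \<eta> t"
    unfolding gf_def using p1 by (intro tendsto_intros Ep_conv[OF mu eta w eps Bp]) simp
  have xb: "xpi p (\<eta>s n) \<in> {-Mb..Mb}" for n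
  proof -
    have "\<bar>xpi p (\<eta>s n)\<bar> \<le> Mb" unfolding Mb_def by (rule xpi_bound[OF mu eps Bp p0 p1])
    then show ?thesis by (simp add: abs_le_iff)
  qed
  show ?thesis
  proof (rule LIMSEQ_I)
    fix r :: real assume r: "0 < r"
    define \<delta> where "\<delta> = r / (3 * L)"
    have d0: "0 < \<delta>" unfolding \<delta>_def using r L0 by simp
    have Ld: "L * \<delta> = r / 3" unfolding \<delta>_def using L0 by simp
    have tb: "\<forall>e>0. \<exists>k. finite k \<and> k \<subseteq> {-Mb..Mb} \<and> {-Mb..Mb} \<subseteq> (\<Union>x\<in>k. ball x e)"
      by (rule seq_compact_imp_totally_bounded[OF compact_imp_seq_compact[OF compact_Icc]])
    obtain G where G0: "finite G \<and> G \<subseteq> {-Mb..Mb} \<and> {-Mb..Mb} \<subseteq> (\<Union>s\<in>G. ball s \<delta>)"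
      using tb[rule_format, OF d0] by (elim exE) (rule that)
    have G: "finite G" "{-Mb..Mb} \<subseteq> (\<Union>s\<in>G. ball s \<delta>)" using G0 by simp_all
    have ev1: "eventually (\<lambda>n. dist (gf p (\<eta>s n) x) (gf p \<eta> x) < r) sequentially"
      using gconv[of x] r by (simp add: tendsto_iff)
    have ev2: "eventually (\<lambda>n. \<forall>s\<in>G. dist (gf p (\<eta>s n) s) (gf p \<eta> s) < r / 3) sequentially"
    proof (rule eventually_ball_finite[OF G(1)], rule ballI)
      fix s assume "s \<in> G"
      show "eventually (\<lambda>n. dist (gf p (\<eta>s n) s) (gf p \<eta> s) < r / 3) sequentially"
        using gconv[of s] r unfolding tendsto_iff by (meson zero_less_divide_iff zero_less_numeral)
    qed
    obtain no where no0: "\<forall>n\<ge>no. dist (gf p (\<eta>s n) x) (gf p \<eta> x) < r \<and>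
        (\<forall>s\<in>G. dist (gf p (\<eta>s n) s) (gf p \<eta> s) < r / 3)"
      using eventually_conj[OF ev1 ev2] unfolding eventually_sequentially by (elim exE) (rule that)
    note no = no0[rule_format]
    show "\<exists>no. \<forall>n\<ge>no. norm (cpi p (\<eta>s n) - cpi p \<eta>) < r"
    proof (intro exI allI impI)
      fix n assume n: "no \<le> n"
      define xn where "xn = xpi p (\<eta>s n)"
      have up: "cpi p (\<eta>s n) < cpi p \<eta> + r"
      proof -
        have "cpi p (\<eta>s n) \<le> gf p (\<eta>s n) x"
          unfolding cn by (rule gf_min[OF mu eps B0 p0 p1])
        moreover have "gf p (\<eta>s n) x < gf p \<eta> x + r"
          using conjunct1[OF no[OF n]] unfolding dist_real_def abs_less_iff by linarith
        ultimately show ?thesis unfolding ceta by linarith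
      qed
      have "xn \<in> {-Mb..Mb}" unfolding xn_def by (rule xb)
      then have "xn \<in> (\<Union>s\<in>G. ball s \<delta>)" by (rule subsetD[OF G(2)])
      then obtain s where s1: "s \<in> G" and s2: "xn \<in> ball s \<delta>" by (rule UN_E)
      have s: "s \<in> G" "dist s xn < \<delta>" using s1 s2 by simp_all
      have lo: "cpi p \<eta> - r < cpi p (\<eta>s n)"
      proof -
        have "gf p (\<eta>s n) s - L * \<bar>xn - s\<bar> \<le> gf p (\<eta>s n) xn"
          unfolding L_def by (rule gf_lip[OF mu eps B0 p1])
        moreover have "L * \<bar>xn - s\<bar> \<le> L * \<delta>"
          using s(2) L0 by (intro mult_left_mono) (auto simp: dist_real_def)
        moreover have "gf p \<eta> s - r / 3 < gf p (\<eta>s n) s"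
          using bspec[OF conjunct2[OF no[OF n]] s(1)] unfolding dist_real_def abs_less_iff by linarith
        moreover have "gf p \<eta> x \<le> gf p \<eta> s"
          unfolding x_def by (rule gf_min[OF eta eps B0 p0 p1])
        ultimately have "gf p \<eta> x - r < gf p (\<eta>s n) xn" using Ld r by linarith
        then show ?thesis unfolding ceta cn xn_def .
      qed
      show "norm (cpi p (\<eta>s n) - cpi p \<eta>) < r"
        using up lo by (simp add: abs_less_iff)
    qed
  qed
qed

end
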